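(* Let $n$ be a positive integer and $k$ an integer with $0\le k\le n-1$. Then $$\binom{2k}{k}\sum_{i=0}^{k}\left(\binom{n}{k+i+1}+4\binom{n}{k+i+2}\right)\binom{k+i}{i}\binom{k}{i}\equiv 0\pmod n.$$
   Context: Binomial coefficients $\binom{a}{b}$ with $b>a\ge 0$ are zero. *)

theory Defs
  imports Main
begin

end

theory Submission
  imports Defs Complex_Main
begin

lemma alg:
  fixes A A' c c' r r' s s' s'' K I :: real
  assumes F1: "(K+I+1)*c' = (K-I)*c" and F2: "(K+I)*r' = I*r"
    and F3: "(K-I+1)*s' = I*s" and F4: "(K+1-I)*s'' = (K+1)*s"
    and F5: "(K+1)*A' = K*A" and F6: "A*s = c*r"
    and p: "r > 0" "K+I > 0" "K-I+1 > 0" "K+1 > 0" "K+I+1>0"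
  shows "A*(r*s+4*r'*s') + 2*(K+I+1)*(A*r'*s - (A-A')*r'*s'') = (K+I+1)*(c-c')*r^2"
proof -
  have "((K+I)*(K-I+1)*(K+1)*r) * (A*(r*s+4*r'*s') + 2*(K+I+1)*(A*r'*s - (A-A')*r'*s''))
       = ((K+I)*(K-I+1)*(K+1)*r) * ((K+I+1)*(c-c')*r^2)"
    using F1 F2 F3 F4 F5 F6 by algebra
  moreover have "(K+I)*(K-I+1)*(K+1)*r \<noteq> 0" using p by auto
  ultimately show ?thesis by simp
qed

lemma ratio1: "Suc j * (n choose Suc j) = (n - j) * (n choose j)"
  using binomial_absorption[of j n] binomial_absorb_comp[of n j] by simp

lemma key_mid:
  fixes k i :: nat
  assumes "1 \<le> i" "i \<le> k"
  shows "(k+i+1) dvd ((2*k) choose k) * (((k+i) choose i) * (k choose i) + 4 * ((k+i-1) choose (i-1)) * (k choose (i-1)))"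
proof -
  define A where "A = (2*k) choose k"
  define A' where "A' = (2*k) choose (k+1)"
  define c where "c = (2*k) choose (k+i)"
  define c' where "c' = (2*k) choose (k+i+1)"
  define r where "r = (k+i) choose i"
  define r' where "r' = (k+i-1) choose (i-1)"
  define s where "s = k choose i"
  define s' where "s' = k choose (i-1)"
  define s'' where "s'' = (k+1) choose i"
  obtain a where ia: "i = Suc a" using assms by (cases i) auto
  have F1: "(k+i+1)*c' = (k-i)*c" unfolding c_def c'_def
    using ratio1[of "k+i" "2*k"] by (simp add: algebra_simps)
  have F2: "(k+i)*r' = i*r" unfolding r_def r'_def ia
    using Suc_times_binomial_eq[of "k+a" a] by (simp add: algebra_simps)
  have F3: "(k-i+1)*s' = i*s" unfolding s_def s'_def ia
  proof -
    have "k - Suc a + 1 = k - a" using assms ia by simp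
    then show "(k - Suc a + 1) * (k choose (Suc a - 1)) = Suc a * (k choose Suc a)"
      using ratio1[of a k] by simp
  qed
  have F4: "(k+1-i)*s'' = (k+1)*s" unfolding s_def s''_def
    using binomial_absorb_comp[of "k+1" i] by simp
  have F5: "(k+1)*A' = k*A" unfolding A_def A'_def
    using ratio1[of k "2*k"] by (simp add: algebra_simps)
  have F6: "A*s = c*r" unfolding A_def s_def c_def r_def
  proof -
    have "((2*k) choose k) * (k choose i) = ((2*k) choose i) * ((2*k - i) choose (k - i))"
      using choose_mult[of i k "2*k"] assms by simp
    moreover have "((2*k) choose (k+i)) * ((k+i) choose i) = ((2*k) choose i) * ((2*k - i) choose k)"
      using choose_mult[of i "k+i" "2*k"] assms by simp
    moreover have "(2*k - i) choose (k - i) = (2*k - i) choose k"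
      using binomial_symmetric[of "k-i" "2*k-i"] assms by simp
    ultimately show "((2*k) choose k) * (k choose i) = ((2*k) choose (k+i)) * ((k+i) choose i)" by simp
  qed
  have rpos: "r > 0" unfolding r_def by simp
  have E: "real A*(real r*real s+4*real r'*real s') + 2*(real k+real i+1)*(real A*real r'*real s - (real A-real A')*real r'*real s'')
     = (real k+real i+1)*(real c-real c')*(real r)^2"
  proof (rule alg)
    show "(real k + real i + 1) * real c' = (real k - real i) * real c"
      using arg_cong[OF F1, of real] assms by (simp add: of_nat_diff algebra_simps)
    show "(real k + real i) * real r' = real i * real r"
      using arg_cong[OF F2, of real] by (simp add: algebra_simps)
    show "(real k - real i + 1) * real s' = real i * real s"
    proof -
      have h: "real ((k-i+1)*s') = real (i*s)" using F3 by simp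
      have hk: "real (k-i+1) = real k - real i + 1" using assms by (simp add: of_nat_diff)
      show ?thesis using h unfolding of_nat_mult hk .
    qed
    show "(real k + 1 - real i) * real s'' = (real k + 1) * real s"
    proof -
      have h: "real ((k+1-i)*s'') = real ((k+1)*s)" using F4 by simp
      have hk: "real (k+1-i) = real k + 1 - real i" using assms by (simp add: of_nat_diff)
      show ?thesis using h unfolding of_nat_mult hk by simp
    qed
    show "(real k + 1) * real A' = real k * real A"
      using arg_cong[OF F5, of real] by (simp add: algebra_simps)
    show "real A * real s = real c * real r"
      using arg_cong[OF F6, of real] by (simp add: algebra_simps)
  qed (use rpos assms in auto)
  define Z :: int where "Z = int A*int r'*int s - (int A-int A')*int r'*int s''"
  define b :: int where "b = int A*(int r*int s+4*int r'*int s')"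
  have "b + 2*(int k+int i+1)*Z = (int k+int i+1)*(int c-int c')*(int r)^2"
  proof -
    have "real_of_int (b + 2*(int k+int i+1)*Z) = real_of_int ((int k+int i+1)*(int c-int c')*(int r)^2)"
      using E unfolding b_def Z_def by simp
    then show ?thesis by (simp only: of_int_eq_iff)
  qed
  then have "b = (int k+int i+1) * ((int c-int c')*(int r)^2 - 2*Z)" by (simp add: algebra_simps)
  moreover have "int (k+i+1) = int k + int i + 1" by simp
  ultimately have "int (k+i+1) dvd b" using dvd_triv_left by metis
  moreover have "b = int (A * (r * s + 4 * r' * s'))" unfolding b_def by simp
  ultimately have "(k+i+1) dvd (A * (r * s + 4 * r' * s'))" by (simp only: int_dvd_int_iff)
  then show ?thesis unfolding A_def r_def s_def r'_def s'_def by (simp add: mult.assoc)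
qed

lemma catalan_dvd: "(k+1) dvd ((2*k) choose k)"
proof -
  have F5: "(k+1)*((2*k) choose (k+1)) = k*((2*k) choose k)"
    using ratio1[of k "2*k"] by (simp add: algebra_simps)
  have "(2*k) choose k = (k+1) * (((2*k) choose k) - ((2*k) choose (k+1)))"
    using F5 by (simp add: algebra_simps diff_mult_distrib2)
  then show ?thesis by (metis dvd_triv_left)
qed

definition T :: "nat \<Rightarrow> nat \<Rightarrow> nat" where
  "T k i = ((k+i) choose i) * (k choose i) + (if i = 0 then 0 else 4 * ((k+i-1) choose (i-1)) * (k choose (i-1)))"

lemma key: assumes "i \<le> k+1" shows "(k+i+1) dvd ((2*k) choose k) * T k i"
proof (cases "i = 0")
  case True then show ?thesis using catalan_dvd[of k] by (simp add: T_def)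
next
  case False
  show ?thesis
  proof (cases "i = k+1")
    case True
    obtain q where q: "(2*k) choose k = (k+1)*q" using catalan_dvd[of k] by blast
    have "((2*k) choose k) * T k i = 4*((2*k) choose k)*((2*k) choose k)"
      using True by (simp add: T_def mult_2)
    also have "\<dots> = (k+i+1) * (2*q*((2*k) choose k))"
    proof -
      have "4*A*A = (k+i+1)*(2*q*A)" if "A = (k+1)*q" for A using that True by (simp add: algebra_simps)
      then show ?thesis using q by blast
    qed
    finally show ?thesis by (metis dvd_triv_left)
  next
    case False
    then have "1 \<le> i" "i \<le> k" using \<open>i \<noteq> 0\<close> assms by auto
    from key_mid[OF this] show ?thesis using \<open>i \<noteq> 0\<close> by (simp add: T_def mult.assoc)
  qed
qed

theorem mainTheorem9:
  fixes n k :: nat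
  assumes "n \<ge> 1" and "k \<le> n - 1"
  shows "n dvd ((2*k) choose k) *
    (\<Sum>i=0..k. ((n choose (k+i+1)) + 4 * (n choose (k+i+2))) * ((k+i) choose i) * (k choose i))"
proof -
  have reidx: "(\<Sum>i=0..k. ((n choose (k+i+1)) + 4 * (n choose (k+i+2))) * ((k+i) choose i) * (k choose i))
      = (\<Sum>i=0..k+1. (n choose (k+i+1)) * T k i)"
  proof -
    have s1: "(\<Sum>i=0..k+1. (n choose (k+i+1)) * T k i)
      = (\<Sum>i=0..k+1. (n choose (k+i+1)) * (((k+i) choose i) * (k choose i)))
        + (\<Sum>i=0..k+1. (n choose (k+i+1)) * (if i = 0 then 0 else 4 * ((k+i-1) choose (i-1)) * (k choose (i-1))))"
      unfolding T_def by (simp add: sum.distrib algebra_simps)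
    have s2: "(\<Sum>i=0..k+1. (n choose (k+i+1)) * (((k+i) choose i) * (k choose i)))
       = (\<Sum>i=0..k. (n choose (k+i+1)) * (((k+i) choose i) * (k choose i)))"
      by simp
    have s3: "(\<Sum>i=0..k+1. (n choose (k+i+1)) * (if i = 0 then 0 else 4 * ((k+i-1) choose (i-1)) * (k choose (i-1))))
       = (\<Sum>i=0..k. (n choose (k+i+2)) * (4 * ((k+i) choose i) * (k choose i)))"
      unfolding Suc_eq_plus1[symmetric] sum.atLeast0_atMost_Suc_shift by simp
    show ?thesis unfolding s1 s2 s3 by (simp add: sum.distrib[symmetric] algebra_simps)
  qed
  obtain n' where n: "n = Suc n'" using assms by (cases n) auto
  have "n dvd ((2*k) choose k) * (\<Sum>i=0..k+1. (n choose (k+i+1)) * T k i)"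
    unfolding sum_distrib_left
  proof (rule dvd_sum)
    fix i assume "i \<in> {0..k+1}"
    then have "i \<le> k+1" by simp
    from key[OF this] obtain q where q: "((2*k) choose k) * T k i = (k+i+1)*q" by blast
    have "((2*k) choose k) * ((n choose (k+i+1)) * T k i) = (n choose (k+i+1)) * (((2*k) choose k) * T k i)"
      by (simp only: ac_simps)
    also have "\<dots> = ((k+i+1) * (n choose (k+i+1))) * q"
      unfolding q by (simp only: ac_simps)
    also have "(k+i+1) * (n choose (k+i+1)) = n * (n' choose (k+i))"
      unfolding n using Suc_times_binomial[of "k+i" n'] by simp
    finally show "n dvd ((2*k) choose k) * ((n choose (k+i+1)) * T k i)" by simp
  qed
  then show ?thesis unfolding reidx .
qed

end
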